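(* Let $\Sigma=(I,X,\mathcal U,\phi,Y,h)$ be a forward complete control system with outputs. If $\Sigma$ is OUAG and BORS, then $\Sigma$ is OUGB.
   Context: Let $I\in\{\mathbb N_0,\mathbb R_0^+\}$. A forward complete control system with outputs $\Sigma=(I,X,\mathcal U,\phi,Y,h)$ consists of: a normed space $(X,\|\cdot\|_X)$; a vector space $U$ and a normed linear subspace $(\mathcal U,\|\cdot\|_{\mathcal U})$ of $\{u:I\to U\}$ such that for all $u\in\mathcal U,\tau\in I$, $u(\cdot+\tau)\in\mathcal U$ with $\|u(\cdot+\tau)\|_{\mathcal U}\le\|u\|_{\mathcal U}$, and for $t_2\ge t_1\ge 0$ the function $u|_{[t_1,t_2]}$ ($u$ on $[t_1,t_2]$, $0$ elsewhere) lies in $\mathcal U$ with norm $\le\|u\|_{\mathcal U}$; a map $\phi:I\times X\times\mathcal U\to X$ with $\phi(0,x,u)=x$, causality, and cocycle property $\phi(t+s,x,u)=\phi(s,\phi(t,x,u),u(t+\cdot))$; a normed space $Y$ and $h:X\times U\to Y$. Write $y(t,x,u)=h(\phi(t,x,u),u(t))$, $B_r=\{x:\|x\|_X<r\}$, $B_{r,\mathcal U}=\{u:\|u\|_{\mathcal U}<r\}$; $\mathcal K_\infty$ = unbounded continuous strictly increasing functions $\mathbb R_0^+\to\mathbb R_0^+$ vanishing at $0$. OUAG: $\exists\gamma\in\mathcal K_\infty$ such that for all $\varepsilon,r,s>0$ there is $\tau\in I$ with $\|y(t,x,u)\|_Y\le\varepsilon+\gamma(\|u\|_{\mathcal U})$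 for all $x\in B_r,u\in B_{s,\mathcal U},t\ge\tau$. BORS: for all $C>0,\tau\in I$: $\sup\{\|y(t,x,u)\|_Y:\|x\|_X<C,\|u\|_{\mathcal U}<C,t\in I,t<\tau\}<\infty$. OUGB: $\exists\sigma,\gamma\in\mathcal K_\infty,c>0$ with $\|y(t,x,u)\|_Y\le\sigma(\|x\|_X)+\gamma(\|u\|_{\mathcal U})+c$ for all $x\in X,u\in\mathcal U,t\in I$. *)

theory Defs
  imports "HOL-Analysis.Analysis"
begin

definition time_domain :: "real set \<Rightarrow> bool" where
  "time_domain T \<longleftrightarrow> T = range real \<or> T = {0..}"

definition Kinf :: "(real \<Rightarrow> real) \<Rightarrow> bool" where
  "Kinf f \<longleftrightarrow> continuous_on {0..} f \<and> strict_mono_on {0..} f \<and> f 0 = 0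
      \<and> (\<forall>M. \<exists>r\<ge>0. f r > M)"

text \<open>Inputs are functions I \<rightarrow> U, represented as functions on the reals that vanish off I.\<close>
definition shift_in :: "real set \<Rightarrow> real \<Rightarrow> (real \<Rightarrow> 'u::zero) \<Rightarrow> real \<Rightarrow> 'u" where
  "shift_in T \<tau> u = (\<lambda>t. if t \<in> T then u (t + \<tau>) else 0)"

definition restr_in :: "real set \<Rightarrow> real \<Rightarrow> real \<Rightarrow> (real \<Rightarrow> 'u::zero) \<Rightarrow> real \<Rightarrow> 'u" where
  "restr_in T t1 t2 u = (\<lambda>t. if t \<in> T \<and> t1 \<le> t \<and> t \<le> t2 then u t else 0)"

definition input_space ::
  "real set \<Rightarrow> (real \<Rightarrow> 'u::real_vector) set \<Rightarrow> ((real \<Rightarrow> 'u) \<Rightarrow> real) \<Rightarrow> bool" where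
  "input_space T UU nU \<longleftrightarrow>
     (\<forall>u\<in>UU. \<forall>t. t \<notin> T \<longrightarrow> u t = 0) \<and>
     (\<lambda>_. 0) \<in> UU \<and>
     (\<forall>u\<in>UU. \<forall>v\<in>UU. (\<lambda>t. u t + v t) \<in> UU) \<and>
     (\<forall>u\<in>UU. \<forall>a::real. (\<lambda>t. a *\<^sub>R u t) \<in> UU) \<and>
     (\<forall>u\<in>UU. nU u \<ge> 0) \<and>
     (\<forall>u\<in>UU. nU u = 0 \<longleftrightarrow> u = (\<lambda>_. 0)) \<and>
     (\<forall>u\<in>UU. \<forall>a::real. nU (\<lambda>t. a *\<^sub>R u t) = \<bar>a\<bar> * nU u) \<and>
     (\<forall>u\<in>UU. \<forall>v\<in>UU. nU (\<lambda>t. u t + v t) \<le> nU u + nU v) \<and>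
     (\<forall>u\<in>UU. \<forall>\<tau>\<in>T. shift_in T \<tau> u \<in> UU \<and> nU (shift_in T \<tau> u) \<le> nU u) \<and>
     (\<forall>u\<in>UU. \<forall>t1\<in>T. \<forall>t2\<in>T. t1 \<le> t2 \<longrightarrow>
         restr_in T t1 t2 u \<in> UU \<and> nU (restr_in T t1 t2 u) \<le> nU u)"

text \<open>Forward complete control system with outputs; X is the whole normed type 'x,
  Y the whole normed type 'y.\<close>
definition fc_system ::
  "real set \<Rightarrow> (real \<Rightarrow> 'u::real_vector) set \<Rightarrow> ((real \<Rightarrow> 'u) \<Rightarrow> real)
   \<Rightarrow> (real \<Rightarrow> 'x::real_normed_vector \<Rightarrow> (real \<Rightarrow> 'u) \<Rightarrow> 'x)
   \<Rightarrow> ('x \<Rightarrow> 'u \<Rightarrow> 'y::real_normed_vector) \<Rightarrow> bool" where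
  "fc_system T UU nU \<phi> h \<longleftrightarrow>
     time_domain T \<and> input_space T UU nU \<and>
     (\<forall>x. \<forall>u\<in>UU. \<phi> 0 x u = x) \<and>
     (\<forall>t\<in>T. \<forall>x. \<forall>u\<in>UU. \<forall>v\<in>UU.
        (\<forall>s\<in>T. s \<le> t \<longrightarrow> u s = v s) \<longrightarrow> \<phi> t x u = \<phi> t x v) \<and>
     (\<forall>t\<in>T. \<forall>s\<in>T. \<forall>x. \<forall>u\<in>UU. \<phi> (t + s) x u = \<phi> s (\<phi> t x u) (shift_in T t u))"

definition out :: "(real \<Rightarrow> 'x \<Rightarrow> (real \<Rightarrow> 'u) \<Rightarrow> 'x) \<Rightarrow> ('x \<Rightarrow> 'u \<Rightarrow> 'y)
   \<Rightarrow> real \<Rightarrow> 'x \<Rightarrow> (real \<Rightarrow> 'u) \<Rightarrow> 'y" where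
  "out \<phi> h t x u = h (\<phi> t x u) (u t)"

definition OUAG ::
  "real set \<Rightarrow> (real \<Rightarrow> 'u::real_vector) set \<Rightarrow> ((real \<Rightarrow> 'u) \<Rightarrow> real)
   \<Rightarrow> (real \<Rightarrow> 'x::real_normed_vector \<Rightarrow> (real \<Rightarrow> 'u) \<Rightarrow> 'x)
   \<Rightarrow> ('x \<Rightarrow> 'u \<Rightarrow> 'y::real_normed_vector) \<Rightarrow> bool" where
  "OUAG T UU nU \<phi> h \<longleftrightarrow>
     (\<exists>\<gamma>. Kinf \<gamma> \<and> (\<forall>\<epsilon>>0. \<forall>r>0. \<forall>s>0. \<exists>\<tau>\<in>T.
        \<forall>x u t. norm x < r \<longrightarrow> u \<in> UU \<longrightarrow> nU u < s \<longrightarrow> t \<in> T \<longrightarrow> t \<ge> \<tau> \<longrightarrow>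
          norm (out \<phi> h t x u) \<le> \<epsilon> + \<gamma> (nU u)))"

definition BORS ::
  "real set \<Rightarrow> (real \<Rightarrow> 'u::real_vector) set \<Rightarrow> ((real \<Rightarrow> 'u) \<Rightarrow> real)
   \<Rightarrow> (real \<Rightarrow> 'x::real_normed_vector \<Rightarrow> (real \<Rightarrow> 'u) \<Rightarrow> 'x)
   \<Rightarrow> ('x \<Rightarrow> 'u \<Rightarrow> 'y::real_normed_vector) \<Rightarrow> bool" where
  "BORS T UU nU \<phi> h \<longleftrightarrow>
     (\<forall>C>0. \<forall>\<tau>\<in>T. bdd_above
        {norm (out \<phi> h t x u) | t x u. norm x < C \<and> u \<in> UU \<and> nU u < C \<and> t \<in> T \<and> t < \<tau>})"

definition OUGB ::
  "real set \<Rightarrow> (real \<Rightarrow> 'u::real_vector) set \<Rightarrow> ((real \<Rightarrow> 'u) \<Rightarrow> real)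
   \<Rightarrow> (real \<Rightarrow> 'x::real_normed_vector \<Rightarrow> (real \<Rightarrow> 'u) \<Rightarrow> 'x)
   \<Rightarrow> ('x \<Rightarrow> 'u \<Rightarrow> 'y::real_normed_vector) \<Rightarrow> bool" where
  "OUGB T UU nU \<phi> h \<longleftrightarrow>
     (\<exists>\<sigma> \<gamma> c. Kinf \<sigma> \<and> Kinf \<gamma> \<and> c > 0 \<and>
        (\<forall>x. \<forall>u\<in>UU. \<forall>t\<in>T. norm (out \<phi> h t x u) \<le> \<sigma> (norm x) + \<gamma> (nU u) + c))"

end

theory Submission
  imports Defs
begin
definition clamp :: "real \<Rightarrow> real" where "clamp x = min 1 (max 0 x)"
definition gsum :: "(nat \<Rightarrow> real) \<Rightarrow> nat \<Rightarrow> real \<Rightarrow> real" where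
  "gsum N m a = a + (\<Sum>k<m. N k * clamp (a - real k))"
definition alf :: "(nat \<Rightarrow> real) \<Rightarrow> real \<Rightarrow> real" where
  "alf N a = gsum N (nat \<lfloor>a\<rfloor> + 1) a"

lemma alf_eq:
  assumes "m \<ge> nat \<lfloor>a\<rfloor> + 1"
  shows "alf N a = gsum N m a"
proof -
  have "(\<Sum>k<m. N k * clamp (a - real k)) = (\<Sum>k<nat \<lfloor>a\<rfloor> + 1. N k * clamp (a - real k))"
  proof (rule sum.mono_neutral_right)
    show "\<forall>i\<in>{..<m} - {..<nat \<lfloor>a\<rfloor> + 1}. N i * clamp (a - real i) = 0"
    proof
      fix i assume "i \<in> {..<m} - {..<nat \<lfloor>a\<rfloor> + 1}"
      hence "i \<ge> nat \<lfloor>a\<rfloor> + 1" by auto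
      hence "real i > a" by linarith
      thus "N i * clamp (a - real i) = 0" by (simp add: clamp_def)
    qed
  qed (use assms in auto)
  thus ?thesis by (simp add: alf_def gsum_def)
qed

lemma clamp_mono: "x \<le> y \<Longrightarrow> clamp x \<le> clamp y" by (simp add: clamp_def)
lemma clamp_nonneg: "clamp x \<ge> 0" by (simp add: clamp_def)

lemma isCont_gsum: "isCont (gsum N m) a"
  unfolding gsum_def clamp_def by (intro continuous_intros)

lemma dominate:
  fixes M :: "nat \<Rightarrow> real"
  assumes mono: "mono M" and nn: "\<And>n. M n \<ge> 0"
  shows "continuous_on {0..} (alf (\<lambda>k. M (k+2))) \<and> strict_mono_on {0..} (alf (\<lambda>k. M (k+2)))
     \<and> alf (\<lambda>k. M (k+2)) 0 = 0 \<and> (\<forall>B. \<exists>r\<ge>0. alf (\<lambda>k. M (k+2)) r > B)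
     \<and> (\<forall>a\<ge>0. M (nat \<lceil>a\<rceil>) \<le> alf (\<lambda>k. M (k+2)) a + (M 1 + 1))"
proof -
  define N where "N = (\<lambda>k. M (k+2))"
  have N: "N k \<ge> 0" for k using nn by (simp add: N_def)
  have sumnn: "(\<Sum>k<m. N k * clamp (a - real k)) \<ge> 0" for m a
    by (intro sum_nonneg mult_nonneg_nonneg N clamp_nonneg)
  have cont: "isCont (alf N) a0" for a0
  proof -
    let ?m = "nat \<lfloor>a0\<rfloor> + 2"
    have "\<forall>\<^sub>F x in nhds a0. alf N x = gsum N ?m x"
    proof -
      have "\<forall>\<^sub>F x in nhds a0. x \<in> ball a0 1" by (intro eventually_nhds_in_open) auto
      thus ?thesis
      proof (rule eventually_mono)
        fix x assume "x \<in> ball a0 1"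
        hence "x < a0 + 1" by (auto simp: dist_real_def)
        hence "\<lfloor>x\<rfloor> \<le> \<lfloor>a0\<rfloor> + 1" by linarith
        hence "nat \<lfloor>x\<rfloor> + 1 \<le> ?m" by linarith
        thus "alf N x = gsum N ?m x" by (rule alf_eq)
      qed
    qed
    thus ?thesis using isCont_gsum isCont_cong by blast
  qed
  have sm: "strict_mono_on {0..} (alf N)"
  proof (rule strict_mono_onI)
    fix a b :: real assume "a \<in> {0..}" "b \<in> {0..}" "a < b"
    let ?m = "nat \<lfloor>b\<rfloor> + 1"
    have "nat \<lfloor>a\<rfloor> + 1 \<le> ?m" using \<open>a < b\<close> by linarith
    hence "alf N a = gsum N ?m a" by (rule alf_eq)
    also have "\<dots> < gsum N ?m b" unfolding gsum_def
      using \<open>a < b\<close> by (intro add_less_le_mono sum_mono mult_left_mono clamp_mono N) auto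
    also have "\<dots> = alf N b" by (rule alf_eq[symmetric]) simp
    finally show "alf N a < alf N b" .
  qed
  have z: "alf N 0 = 0" by (simp add: alf_def gsum_def clamp_def)
  have ge: "alf N r \<ge> r" for r using sumnn[where m="nat \<lfloor>r\<rfloor> + 1" and a=r] unfolding alf_def gsum_def by linarith
  have unb: "\<forall>B. \<exists>r\<ge>0. alf N r > B"
  proof
    fix B show "\<exists>r\<ge>0. alf N r > B"
      by (rule exI[of _ "max 0 (B+1)"]) (use ge[of "max 0 (B+1)"] in auto)
  qed
  have dom: "M (nat \<lceil>a\<rceil>) \<le> alf N a + (M 1 + 1)" if "a \<ge> 0" for a
  proof (cases "a < 1")
    case True
    hence "nat \<lceil>a\<rceil> \<le> 1" by linarith
    hence "M (nat \<lceil>a\<rceil>) \<le> M 1" using mono by (simp add: mono_def)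
    moreover have "alf N a \<ge> 0" using ge[of a] that by simp
    ultimately show ?thesis by simp
  next
    case False
    define j where "j = nat \<lfloor>a\<rfloor>"
    have j1: "j \<ge> 1" using False by (simp add: j_def) linarith
    have ja: "real j \<le> a" using that unfolding j_def by linarith
    have "nat \<lceil>a\<rceil> \<le> j + 1" unfolding j_def by linarith
    hence "M (nat \<lceil>a\<rceil>) \<le> M (j + 1)" using mono by (simp add: mono_def)
    also have "M (j+1) = N (j - 1) * clamp (a - real (j - 1))"
      using j1 ja by (simp add: N_def clamp_def of_nat_diff)
    also have "\<dots> \<le> (\<Sum>k<j+1. N k * clamp (a - real k))"
      by (rule member_le_sum) (use N clamp_nonneg j1 in auto)
    also have "\<dots> \<le> alf N a" using that by (simp add: alf_def gsum_def j_def)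
    finally show ?thesis using nn[of 1] by simp
  qed
  show ?thesis unfolding N_def[symmetric]
    using cont sm z unb dom by (auto intro: continuous_at_imp_continuous_on)
qed

lemma dominate2:
  fixes M :: "nat \<Rightarrow> real"
  assumes "mono M" and "\<And>n. M n \<ge> 0"
  shows "\<exists>\<alpha> c. Kinf \<alpha> \<and> c > 0 \<and> (\<forall>a\<ge>0. M (nat \<lceil>a\<rceil>) \<le> \<alpha> a + c)"
proof -
  have "M 1 + 1 > 0" using assms(2)[of 1] by simp
  thus ?thesis using dominate[OF assms] unfolding Kinf_def by blast
qed

lemma Kinf_nonneg: "Kinf f \<Longrightarrow> s \<ge> 0 \<Longrightarrow> f s \<ge> 0"
  unfolding Kinf_def strict_mono_on_def
  by (metis atLeast_iff less_eq_real_def order_refl)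

lemma Kinf_mono: "Kinf f \<Longrightarrow> 0 \<le> a \<Longrightarrow> a \<le> b \<Longrightarrow> f a \<le> f b"
  unfolding Kinf_def strict_mono_on_def
  by (metis atLeast_iff less_eq_real_def order_trans)

lemma Kinf_add:
  assumes "Kinf f" "Kinf g" shows "Kinf (\<lambda>s. f s + g s)"
proof -
  have "continuous_on {0..} (\<lambda>s. f s + g s)"
    using assms unfolding Kinf_def by (intro continuous_on_add) auto
  moreover have "strict_mono_on {0..} (\<lambda>s. f s + g s)"
    using assms unfolding Kinf_def strict_mono_on_def by (smt (verit))
  moreover have "\<exists>r\<ge>0. f r + g r > B" for B
  proof -
    obtain r where "r \<ge> 0" "f r > B" using assms unfolding Kinf_def by blast
    thus ?thesis using Kinf_nonneg[OF assms(2) \<open>r \<ge> 0\<close>] by (intro exI[of _ r]) auto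
  qed
  ultimately show ?thesis using assms unfolding Kinf_def by auto
qed

theorem lemma7:
  fixes T :: "real set" and UU :: "(real \<Rightarrow> 'u::real_vector) set"
    and nU :: "(real \<Rightarrow> 'u) \<Rightarrow> real"
    and \<phi> :: "real \<Rightarrow> 'x::real_normed_vector \<Rightarrow> (real \<Rightarrow> 'u) \<Rightarrow> 'x"
    and h :: "'x \<Rightarrow> 'u \<Rightarrow> 'y::real_normed_vector"
  assumes "fc_system T UU nU \<phi> h"
    and "OUAG T UU nU \<phi> h"
    and "BORS T UU nU \<phi> h"
  shows "OUGB T UU nU \<phi> h"
proof -
  have "input_space T UU nU" using assms(1) unfolding fc_system_def by simp
  hence nUnn: "\<And>u. u \<in> UU \<Longrightarrow> nU u \<ge> 0"
    unfolding input_space_def by simp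
  obtain \<gamma> where g: "Kinf \<gamma>" and gH: "\<forall>\<epsilon>>0. \<forall>r>0. \<forall>s>0. \<exists>\<tau>\<in>T.
        \<forall>x u t. norm x < r \<longrightarrow> u \<in> UU \<longrightarrow> nU u < s \<longrightarrow> t \<in> T \<longrightarrow> t \<ge> \<tau> \<longrightarrow>
          norm (out \<phi> h t x u) \<le> \<epsilon> + \<gamma> (nU u)"
    using assms(2) unfolding OUAG_def by blast
  have ex1: "\<forall>n::nat. \<exists>\<tau>. \<tau> \<in> T \<and> ( \<forall>x u t. norm x < real n + 1 \<longrightarrow> u \<in> UU \<longrightarrow> nU u < real n + 1
     \<longrightarrow> t \<in> T \<longrightarrow> t \<ge> \<tau> \<longrightarrow> norm (out \<phi> h t x u) \<le> 1 + \<gamma> (nU u))"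
  proof
    fix n :: nat
    have "(1::real) > 0" "real n + 1 > 0" by auto
    thus "\<exists>\<tau>. \<tau> \<in> T \<and> (\<forall>x u t. norm x < real n + 1 \<longrightarrow> u \<in> UU \<longrightarrow> nU u < real n + 1
     \<longrightarrow> t \<in> T \<longrightarrow> t \<ge> \<tau> \<longrightarrow> norm (out \<phi> h t x u) \<le> 1 + \<gamma> (nU u))"
      using gH by blast
  qed
  obtain \<tau> where \<tau>all: "\<forall>n. \<tau> n \<in> T \<and> (\<forall>x u t. norm x < real n + 1 \<longrightarrow> u \<in> UU \<longrightarrow> nU u < real n + 1
     \<longrightarrow> t \<in> T \<longrightarrow> t \<ge> \<tau> n \<longrightarrow> norm (out \<phi> h t x u) \<le> 1 + \<gamma> (nU u))"
    using choice[OF ex1] by blast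
  have \<tau>T: "\<And>n. \<tau> n \<in> T" using \<tau>all by blast
  have \<tau>H: "\<And>n x u t. norm x < real n + 1 \<Longrightarrow> u \<in> UU
     \<Longrightarrow> nU u < real n + 1 \<Longrightarrow> t \<in> T \<Longrightarrow> t \<ge> \<tau> n \<Longrightarrow> norm (out \<phi> h t x u) \<le> 1 + \<gamma> (nU u)"
    using \<tau>all by blast
  have ex2: "\<forall>n. \<exists>B. \<forall>y\<in>{norm (out \<phi> h t x u) | t x u. norm x < real n + 1 \<and> u \<in> UU
      \<and> nU u < real n + 1 \<and> t \<in> T \<and> t < \<tau> n}. y \<le> B"
  proof
    fix n :: nat
    have "bdd_above {norm (out \<phi> h t x u) | t x u. norm x < real n + 1 \<and> u \<in> UU
      \<and> nU u < real n + 1 \<and> t \<in> T \<and> t < \<tau> n}"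
    proof -
      have "real n + 1 > 0" by simp
      have H: "\<forall>C>0. \<forall>\<tau>'\<in>T. bdd_above
        {norm (out \<phi> h t x u) | t x u. norm x < C \<and> u \<in> UU \<and> nU u < C \<and> t \<in> T \<and> t < \<tau>'}"
        using assms(3) unfolding BORS_def .
      show ?thesis using H[rule_format, OF \<open>real n + 1 > 0\<close> \<tau>T[of n]] .
    qed
    thus "\<exists>B. \<forall>y\<in>{norm (out \<phi> h t x u) | t x u. norm x < real n + 1 \<and> u \<in> UU
      \<and> nU u < real n + 1 \<and> t \<in> T \<and> t < \<tau> n}. y \<le> B" unfolding bdd_above_def by blast
  qed
  obtain B where BH: "\<And>n y. y\<in>{norm (out \<phi> h t x u) | t x u. norm x < real n + 1 \<and> u \<in> UU
      \<and> nU u < real n + 1 \<and> t \<in> T \<and> t < \<tau> n} \<Longrightarrow> y \<le> B n"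
    using choice[OF ex2] by blast
  have key: "norm (out \<phi> h t x u) \<le> \<bar>B n\<bar> + 1 + \<gamma> (nU u)"
    if "norm x < real n + 1" "u \<in> UU" "nU u < real n + 1" "t \<in> T" for n x u t
  proof (cases "t < \<tau> n")
    case True
    hence "norm (out \<phi> h t x u) \<le> B n" using that by (intro BH) blast
    moreover have "\<gamma> (nU u) \<ge> 0" using Kinf_nonneg[OF g nUnn[OF that(2)]] .
    ultimately show ?thesis by linarith
  next
    case False
    hence "norm (out \<phi> h t x u) \<le> 1 + \<gamma> (nU u)" using that by (intro \<tau>H) auto
    thus ?thesis by linarith
  qed
  define M where "M n = Max ((\<lambda>k. \<bar>B k\<bar>) ` {..n})" for n
  have Mge: "\<bar>B n\<bar> \<le> M n" for n unfolding M_def by (rule Max_ge) auto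
  have Mnn: "M n \<ge> 0" for n using Mge[of n] by linarith
  have Mmono: "mono M" unfolding mono_def M_def
    by (intro allI impI Max_mono) auto
  obtain \<alpha> c where a: "Kinf \<alpha>" and c: "c > 0" and aH: "\<And>a. a \<ge> 0 \<Longrightarrow> M (nat \<lceil>a\<rceil>) \<le> \<alpha> a + c"
    using dominate2[OF Mmono Mnn] by blast
  have "\<forall>x. \<forall>u\<in>UU. \<forall>t\<in>T. norm (out \<phi> h t x u) \<le> \<alpha> (norm x) + (\<lambda>s. \<alpha> s + \<gamma> s) (nU u) + (c + 1)"
  proof (intro allI ballI)
    fix x :: 'x and u t assume u: "u \<in> UU" and t: "t \<in> T"
    define m where "m = max (norm x) (nU u)"
    have m0: "m \<ge> 0" unfolding m_def by (simp add: le_max_iff_disj)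
    define n where "n = nat \<lceil>m\<rceil>"
    have "norm x < real n + 1" "nU u < real n + 1" unfolding n_def m_def by linarith+
    hence "norm (out \<phi> h t x u) \<le> \<bar>B n\<bar> + 1 + \<gamma> (nU u)" using key u t by blast
    also have "\<dots> \<le> M n + 1 + \<gamma> (nU u)" using Mge by simp
    also have "M n \<le> \<alpha> m + c" unfolding n_def by (rule aH[OF m0])
    also have "\<alpha> m \<le> \<alpha> (norm x) + \<alpha> (nU u)"
      using Kinf_nonneg[OF a, of "norm x"] Kinf_nonneg[OF a nUnn[OF u]] unfolding m_def
      by (cases "norm x \<le> nU u") (auto simp: max_def)
    finally show "norm (out \<phi> h t x u) \<le> \<alpha> (norm x) + (\<lambda>s. \<alpha> s + \<gamma> s) (nU u) + (c + 1)"
      by simp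
  qed
  moreover have "c + 1 > 0" using c by simp
  ultimately show ?thesis unfolding OUGB_def using a Kinf_add[OF a g] by blast
qed
end
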